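(* Let $\rho\in(0,1)$ and let $\Lambda\ge2$ be an integer. The following are equivalent: (a) there exist real numbers $r_1,\dots,r_{\Lambda-1}$ with $r_{s+1}=\dfrac{[1+(\rho^{-1}+1)r_1]r_s+r_1}{1-\rho^{-1}r_1r_s}$ for $1\le s\le\Lambda-2$ and $\rho^2\le r_1\le\cdots\le r_{\Lambda-1}\le\rho$; (b) the numbers $r_k=\rho\dfrac{X^k-1}{1-\rho X^k}$ with $X=\dfrac{1+\rho}{1+\rho^2}$ satisfy $\rho^2\le r_k\le\rho$ for $1\le k\le\Lambda-1$; (c) the numbers $r_k=\rho\dfrac{X^k-1}{1-\rho X^k}$ with $X=\big(\tfrac{2}{1+\rho}\big)^{1/(\Lambda-1)}$ satisfy $\rho^2\le r_k\le\rho$ for $1\le k\le\Lambda-1$; (d) $(1+\rho)^\Lambda\le2(1+\rho^2)^{\Lambda-1}$; (e) $\rho\le\rho^\star_\Lambda$, where for $\Lambda\ge3$, $\rho^\star_\Lambda$ is the unique solution in $(0,1)$ of $(1+\rho)^\Lambda=2(1+\rho^2)^{\Lambda-1}$ (in particular this solution exists and is unique), and $\rho^\star_2=1$. *)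

theory Defs
  imports Complex_Main
begin

definition rho_star :: "nat \<Rightarrow> real" where
  "rho_star \<Lambda> = (if \<Lambda> = 2 then 1 else
     (THE x. 0 < x \<and> x < 1 \<and> (1 + x) ^ \<Lambda> = 2 * (1 + x\<^sup>2) ^ (\<Lambda> - 1)))"

end

theory Submission
  imports Defs
begin

definition gg :: "real \<Rightarrow> real \<Rightarrow> real" where "gg \<rho> t = \<rho>*(t-1)/(1-\<rho>*t)"

lemma lemK:
  assumes "0 < \<rho>" "\<rho> < 1"
  shows "(\<rho>\<^sup>2 \<le> gg \<rho> t \<and> gg \<rho> t \<le> \<rho>) \<longleftrightarrow> ((1+\<rho>)/(1+\<rho>\<^sup>2) \<le> t \<and> t \<le> 2/(1+\<rho>))"
proof
  assume h: "\<rho>\<^sup>2 \<le> gg \<rho> t \<and> gg \<rho> t \<le> \<rho>"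
  have pos: "0 < 1 - \<rho>*t"
  proof (rule ccontr)
    assume "\<not> 0 < 1 - \<rho>*t"
    hence "1 - \<rho>*t \<le> 0" by simp
    moreover have "0 \<le> \<rho>*(t-1)" if "1 - \<rho>*t \<le> 0"
    proof -
      have h1: "1 \<le> \<rho>*t" using that by simp
      hence "0 < \<rho>*t" by linarith
      hence "0 < t" using assms by (simp add: zero_less_mult_iff)
      hence "\<rho>*t \<le> 1*t" using assms by (intro mult_right_mono) auto
      hence "1 \<le> t" using h1 by simp
      thus ?thesis using assms by simp
    qed
    ultimately have "gg \<rho> t \<le> 0" unfolding gg_def by (simp add: divide_nonneg_nonpos)
    moreover have "0 < \<rho>\<^sup>2" using assms by simp
    ultimately show False using h by simp
  qed
  have a: "\<rho>\<^sup>2*(1-\<rho>*t) \<le> \<rho>*(t-1)" using h pos unfolding gg_def by (simp add: pos_le_divide_eq)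
  have b: "\<rho>*(t-1) \<le> \<rho>*(1-\<rho>*t)" using h pos unfolding gg_def by (simp add: pos_divide_le_eq)
  have a': "\<rho>*(1-\<rho>*t) \<le> t-1" using a assms by (simp add: power2_eq_square mult.assoc)
  have b': "t - 1 \<le> 1 - \<rho>*t" using b assms by simp
  have "1+\<rho> \<le> t*(1+\<rho>\<^sup>2)" using a' by (simp add: algebra_simps power2_eq_square)
  hence "(1+\<rho>)/(1+\<rho>\<^sup>2) \<le> t" by (simp add: pos_divide_le_eq add_pos_nonneg)
  moreover have "t*(1+\<rho>) \<le> 2" using b' by (simp add: algebra_simps)
  hence "t \<le> 2/(1+\<rho>)" using assms by (simp add: pos_le_divide_eq)
  ultimately show "(1+\<rho>)/(1+\<rho>\<^sup>2) \<le> t \<and> t \<le> 2/(1+\<rho>)" by simp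
next
  assume h: "(1+\<rho>)/(1+\<rho>\<^sup>2) \<le> t \<and> t \<le> 2/(1+\<rho>)"
  have p2: "0 < 1+\<rho>\<^sup>2" by (simp add: add_pos_nonneg)
  have a': "1+\<rho> \<le> t*(1+\<rho>\<^sup>2)" using h p2 by (simp add: pos_divide_le_eq)
  have b': "t*(1+\<rho>) \<le> 2" using h assms by (simp add: pos_le_divide_eq)
  have "2 < (1+\<rho>)/\<rho>" using assms by (simp add: field_simps)
  hence "t*(1+\<rho>) < (1+\<rho>)/\<rho>" using b' by simp
  hence "t*(1+\<rho>)*\<rho> < 1+\<rho>" using assms by (simp add: less_divide_eq)
  hence "(\<rho>*t)*(1+\<rho>) < 1*(1+\<rho>)" by (simp add: algebra_simps)
  hence "\<rho>*t < 1" using assms by (simp only: mult_less_cancel_right_pos)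
  hence pos: "0 < 1 - \<rho>*t" by simp
  have a: "\<rho>\<^sup>2*(1-\<rho>*t) \<le> \<rho>*(t-1)"
  proof -
    have "\<rho>*(1-\<rho>*t) \<le> t-1" using a' by (simp add: algebra_simps power2_eq_square)
    hence "\<rho>*(\<rho>*(1-\<rho>*t)) \<le> \<rho>*(t-1)" using assms by simp
    thus ?thesis by (simp add: power2_eq_square mult.assoc)
  qed
  have "t-1 \<le> 1-\<rho>*t" using b' by (simp add: algebra_simps)
  hence b: "\<rho>*(t-1) \<le> \<rho>*(1-\<rho>*t)" using assms by (intro mult_left_mono) auto
  show "\<rho>\<^sup>2 \<le> gg \<rho> t \<and> gg \<rho> t \<le> \<rho>" unfolding gg_def using a b pos
    by (simp add: pos_le_divide_eq pos_divide_le_eq)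
qed


lemma Xb_gt1: fixes \<rho> :: real assumes "0 < \<rho>" "\<rho> < 1" shows "1 < (1+\<rho>)/(1+\<rho>\<^sup>2)"
proof -
  have "\<rho>*\<rho> < \<rho>*1" using assms by (intro mult_strict_left_mono) auto
  hence "\<rho>\<^sup>2 < \<rho>" by (simp add: power2_eq_square)
  thus ?thesis by (simp add: add_pos_nonneg)
qed

lemma lemC:
  assumes "0 < \<rho>" "\<rho> < 1" "1 \<le> N"
  shows "(\<forall>k. 1 \<le> k \<and> k \<le> N \<longrightarrow> \<rho>\<^sup>2 \<le> gg \<rho> (X^k) \<and> gg \<rho> (X^k) \<le> \<rho>)
     \<longleftrightarrow> ((1+\<rho>)/(1+\<rho>\<^sup>2) \<le> X \<and> X^N \<le> 2/(1+\<rho>))"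
proof
  assume h: "\<forall>k. 1 \<le> k \<and> k \<le> N \<longrightarrow> \<rho>\<^sup>2 \<le> gg \<rho> (X^k) \<and> gg \<rho> (X^k) \<le> \<rho>"
  from h[rule_format, of 1] assms lemK[OF assms(1,2), of X] have "(1+\<rho>)/(1+\<rho>\<^sup>2) \<le> X" by simp
  moreover from h[rule_format, of N] assms lemK[OF assms(1,2), of "X^N"] have "X^N \<le> 2/(1+\<rho>)" by simp
  ultimately show "(1+\<rho>)/(1+\<rho>\<^sup>2) \<le> X \<and> X^N \<le> 2/(1+\<rho>)" by simp
next
  assume h: "(1+\<rho>)/(1+\<rho>\<^sup>2) \<le> X \<and> X^N \<le> 2/(1+\<rho>)"
  have X1: "1 \<le> X" using h Xb_gt1[OF assms(1,2)] by simp
  show "\<forall>k. 1 \<le> k \<and> k \<le> N \<longrightarrow> \<rho>\<^sup>2 \<le> gg \<rho> (X^k) \<and> gg \<rho> (X^k) \<le> \<rho>"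
  proof (intro allI impI)
    fix k assume k: "1 \<le> k \<and> k \<le> N"
    have "X^1 \<le> X^k" using X1 k by (intro power_increasing) auto
    moreover have "X^k \<le> X^N" using X1 k by (intro power_increasing) auto
    ultimately show "\<rho>\<^sup>2 \<le> gg \<rho> (X^k) \<and> gg \<rho> (X^k) \<le> \<rho>" using h lemK[OF assms(1,2), of "X^k"] by simp
  qed
qed

lemma lemD:
  fixes \<rho> :: real
  assumes "0 < \<rho>"
  shows "(1+\<rho>)^(N+1) \<le> 2*(1+\<rho>\<^sup>2)^N \<longleftrightarrow> ((1+\<rho>)/(1+\<rho>\<^sup>2))^N \<le> 2/(1+\<rho>)"
proof -
  have p2: "0 < (1+\<rho>\<^sup>2)^N" by (intro zero_less_power) (simp add: add_pos_nonneg)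
  have p1: "0 < 1+\<rho>" using assms by simp
  have "((1+\<rho>)/(1+\<rho>\<^sup>2))^N \<le> 2/(1+\<rho>) \<longleftrightarrow> (1+\<rho>)^N/(1+\<rho>\<^sup>2)^N \<le> 2/(1+\<rho>)" by (simp add: power_divide)
  also have "\<dots> \<longleftrightarrow> (1+\<rho>)^N * (1+\<rho>) \<le> 2 * (1+\<rho>\<^sup>2)^N" using p1 p2 by (simp add: divide_le_eq le_divide_eq mult.commute)
  finally show ?thesis by (simp add: mult.commute)
qed

lemma gg_mono: assumes "0 < \<rho>" "\<rho> < 1" "a \<le> b" "b < 1/\<rho>" shows "gg \<rho> a \<le> gg \<rho> b"
proof -
  have pb: "0 < 1 - \<rho>*b" using assms by (simp add: field_simps)
  have "\<rho>*a \<le> \<rho>*b" using assms by (simp add: mult_left_mono)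
  hence pa: "0 < 1 - \<rho>*a" using pb by simp
  have "\<rho>*(a-1)*(1-\<rho>*b) \<le> \<rho>*(b-1)*(1-\<rho>*a)"
  proof -
    have "\<rho>*(b-1)*(1-\<rho>*a) - \<rho>*(a-1)*(1-\<rho>*b) = \<rho>*(1-\<rho>)*(b-a)" by (simp add: algebra_simps)
    moreover have "0 \<le> \<rho>*(1-\<rho>)*(b-a)" using assms by simp
    ultimately show ?thesis by simp
  qed
  thus ?thesis unfolding gg_def using pa pb by (simp add: divide_le_eq le_divide_eq mult.commute mult.left_commute)
qed

definition FF :: "real \<Rightarrow> real \<Rightarrow> real \<Rightarrow> real" where
  "FF \<rho> a b = ((1 + (inverse \<rho> + 1) * a) * b + a) / (1 - inverse \<rho> * a * b)"

lemma FF_gg: assumes "0 < \<rho>" "\<rho> < 1" "1 - \<rho>*s \<noteq> 0" "1 - \<rho>*t \<noteq> 0" "1 - \<rho>*(s*t) \<noteq> 0"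
  shows "FF \<rho> (gg \<rho> s) (gg \<rho> t) = gg \<rho> (s*t)"
proof -
  define u where "u = gg \<rho> s"
  define v where "v = gg \<rho> t"
  have hu: "u*(1-\<rho>*s) = \<rho>*(s-1)" using assms unfolding u_def gg_def by simp
  have hv: "v*(1-\<rho>*t) = \<rho>*(t-1)" using assms unfolding v_def gg_def by simp
  have D: "(1 - inverse \<rho> * u * v) * ((1-\<rho>*s)*(1-\<rho>*t)) = (1-\<rho>)*(1-\<rho>*(s*t))"
  proof -
    have "(1 - inverse \<rho> * u * v) * ((1-\<rho>*s)*(1-\<rho>*t)) = (1-\<rho>*s)*(1-\<rho>*t) - inverse \<rho> * (u*(1-\<rho>*s)) * (v*(1-\<rho>*t))"
      by (simp add: algebra_simps)
    also have "\<dots> = (1-\<rho>*s)*(1-\<rho>*t) - inverse \<rho> * (\<rho>*(s-1)) * (\<rho>*(t-1))" by (simp only: hu hv)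
    also have "\<dots> = (1-\<rho>)*(1-\<rho>*(s*t))" using assms by (simp add: field_simps; simp add: algebra_simps)
    finally show ?thesis .
  qed
  have NN: "((1 + (inverse \<rho> + 1) * u) * v + u) * ((1-\<rho>*s)*(1-\<rho>*t)) = \<rho>*(1-\<rho>)*(s*t-1)"
  proof -
    have "((1 + (inverse \<rho> + 1) * u) * v + u) * ((1-\<rho>*s)*(1-\<rho>*t))
       = (1-\<rho>*s) * (v*(1-\<rho>*t)) + (inverse \<rho> + 1) * (u*(1-\<rho>*s)) * (v*(1-\<rho>*t)) + (u*(1-\<rho>*s))*(1-\<rho>*t)"
      by (simp add: algebra_simps)
    also have "\<dots> = (1-\<rho>*s) * (\<rho>*(t-1)) + (inverse \<rho> + 1) * (\<rho>*(s-1)) * (\<rho>*(t-1)) + (\<rho>*(s-1))*(1-\<rho>*t)" by (simp only: hu hv)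
    also have "\<dots> = \<rho>*(1-\<rho>)*(s*t-1)" using assms by (simp add: field_simps; simp add: algebra_simps)
    finally show ?thesis .
  qed
  have AB: "(1-\<rho>*s)*(1-\<rho>*t) \<noteq> 0" using assms by simp
  have Dnz: "1 - inverse \<rho> * u * v \<noteq> 0" using D AB assms by (metis mult_eq_0_iff right_minus_eq zero_neq_one mult_zero_left less_irrefl)
  have "FF \<rho> u v = (((1 + (inverse \<rho> + 1) * u) * v + u) * ((1-\<rho>*s)*(1-\<rho>*t))) / ((1 - inverse \<rho> * u * v) * ((1-\<rho>*s)*(1-\<rho>*t)))"
    unfolding FF_def using AB by simp
  also have "\<dots> = \<rho>*(1-\<rho>)*(s*t-1) / ((1-\<rho>)*(1-\<rho>*(s*t)))" by (simp only: D NN)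
  also have "\<dots> = gg \<rho> (s*t)" unfolding gg_def using assms by simp
  finally show ?thesis unfolding u_def v_def .
qed

lemma lemE:
  fixes \<Lambda> :: nat
  assumes L3: "\<Lambda> \<ge> 3"
  shows "\<exists>x0::real. 0 < x0 \<and> x0 < 1 \<and> (\<forall>y::real. 0 < y \<and> y < 1 \<longrightarrow> ((1 + y) ^ \<Lambda> = 2 * (1 + y\<^sup>2) ^ (\<Lambda> - 1) \<longleftrightarrow> y = x0))
     \<and> (\<forall>y::real. 0 < y \<and> y < 1 \<longrightarrow> ((1 + y) ^ \<Lambda> \<le> 2 * (1 + y\<^sup>2) ^ (\<Lambda> - 1) \<longleftrightarrow> y \<le> x0))"
proof -
  define n where "n = real \<Lambda>"
  have n3: "n \<ge> 3" using L3 unfolding n_def by simp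
  define L where "L x = n * ln (1+x) - (n-1) * ln (1+x\<^sup>2)" for x :: real
  define p where "p x = n - 2*(n-1)*x - (n-2)*x\<^sup>2" for x :: real
  have pos2: "0 < 1 + x\<^sup>2" for x :: real by (simp add: add_pos_nonneg)
  have der: "(L has_real_derivative (p x / ((1+x)*(1+x\<^sup>2)))) (at x)" if "0 \<le> x" for x
  proof -
    have "(L has_real_derivative (n * (1/(1+x)) - (n-1) * ((2*x) / (1+x\<^sup>2)))) (at x)"
      unfolding L_def using that pos2[of x]
      by (auto intro!: derivative_eq_intros simp: power2_eq_square)
    moreover have "n * (1/(1+x)) - (n-1) * ((2*x) / (1+x\<^sup>2)) = p x / ((1+x)*(1+x\<^sup>2))"
      unfolding p_def using that pos2[of x] by (simp add: field_simps; simp add: algebra_simps power2_eq_square)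
    ultimately show ?thesis by simp
  qed
  have cont: "continuous_on {a..b} L" if "0 \<le> a" for a b
    unfolding L_def using that pos2
    by (auto intro!: continuous_intros) (metis pos2 less_irrefl)
  have pdec: "p b < p a" if "0 \<le> a" "a < b" for a b
  proof -
    have "p a - p b = (b-a)*(2*(n-1) + (n-2)*(a+b))" unfolding p_def by (simp add: algebra_simps power2_eq_square)
    moreover have "0 < (b-a)*(2*(n-1) + (n-2)*(a+b))" using that n3 by (intro mult_pos_pos) (auto intro!: add_pos_nonneg)
    ultimately show ?thesis by simp
  qed
  have "continuous_on {0..1} p" unfolding p_def by (intro continuous_intros)
  moreover have "p 1 \<le> 0" "0 \<le> p 0" using n3 unfolding p_def by auto
  ultimately obtain c where c: "0 \<le> c" "c \<le> 1" "p c = 0" using IVT2'[of p 1 0 0] by auto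
  have c0: "0 < c" using c n3 unfolding p_def by (cases "c = 0") auto
  have c1: "c < 1" using c n3 unfolding p_def by (cases "c = 1") auto
  have ppos: "0 < p x" if "0 \<le> x" "x < c" for x using pdec[of x c] that c by simp
  have pneg: "p x < 0" if "c < x" for x using pdec[of c x] that c by simp
  have Linc: "L a < L b" if "0 \<le> a" "a < b" "b \<le> c" for a b
  proof (rule DERIV_pos_imp_increasing_open[OF that(2)])
    fix x assume "a < x" "x < b"
    thus "\<exists>y. DERIV L x :> y \<and> 0 < y" using der[of x] ppos[of x] that pos2[of x]
      by (intro exI[of _ "p x / ((1+x)*(1+x\<^sup>2))"]) (auto intro!: divide_pos_pos)
  qed (rule cont[OF that(1)])
  have Ldec: "L b < L a" if "c \<le> a" "a < b" for a b
  proof (rule DERIV_neg_imp_decreasing_open[OF that(2)])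
    fix x assume "a < x" "x < b"
    thus "\<exists>y. DERIV L x :> y \<and> y < 0" using der[of x] pneg[of x] that pos2[of x] c0
      by (intro exI[of _ "p x / ((1+x)*(1+x\<^sup>2))"]) (auto intro!: divide_neg_pos)
  qed (use c0 that in \<open>intro cont; simp\<close>)
  have L0: "L 0 = 0" unfolding L_def by simp
  have L1: "L 1 = ln 2" unfolding L_def by (simp add: algebra_simps)
  have Lbig: "ln 2 < L x" if "c \<le> x" "x < 1" for x using Ldec[OF that] L1 by simp
  have "L 0 \<le> ln 2" "ln 2 \<le> L c" using L0 Lbig[of c] c1 by auto
  then obtain x0 where x0: "0 \<le> x0" "x0 \<le> c" "L x0 = ln 2" using IVT'[of L 0 "ln 2" c] cont[of 0 c] c0 by auto
  have x00: "0 < x0" using x0 L0 by (cases "x0 = 0") auto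
  have x0c: "x0 < c" using x0 Lbig[of c] c1 by (cases "x0 = c") auto
  have key: "(1 + y) ^ \<Lambda> \<le> 2 * (1 + y\<^sup>2) ^ (\<Lambda> - 1) \<longleftrightarrow> L y \<le> ln 2"
            "(1 + y) ^ \<Lambda> = 2 * (1 + y\<^sup>2) ^ (\<Lambda> - 1) \<longleftrightarrow> L y = ln 2" if "0 < y" for y
  proof -
    have a: "0 < (1+y)^\<Lambda>" using that by simp
    have b: "0 < 2 * (1 + y\<^sup>2) ^ (\<Lambda> - 1)" using pos2[of y] by simp
    have la: "ln ((1+y)^\<Lambda>) = n * ln (1+y)" using that unfolding n_def by (simp add: ln_realpow)
    have lb: "ln (2 * (1 + y\<^sup>2) ^ (\<Lambda> - 1)) = ln 2 + (n-1) * ln (1+y\<^sup>2)"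
      using pos2[of y] L3 unfolding n_def by (simp add: ln_mult ln_realpow of_nat_diff)
    show "(1 + y) ^ \<Lambda> \<le> 2 * (1 + y\<^sup>2) ^ (\<Lambda> - 1) \<longleftrightarrow> L y \<le> ln 2"
      using ln_le_cancel_iff[OF a b] la lb unfolding L_def by linarith
    show "(1 + y) ^ \<Lambda> = 2 * (1 + y\<^sup>2) ^ (\<Lambda> - 1) \<longleftrightarrow> L y = ln 2"
      using ln_inj_iff[OF a b] la lb unfolding L_def by linarith
  qed
  have cmp: "L y \<le> ln 2 \<longleftrightarrow> y \<le> x0" if "0 < y" "y < 1" for y
  proof (cases "c \<le> y")
    case True thus ?thesis using Lbig[of y] that x0c by auto
  next
    case False
    show ?thesis
    proof (cases y x0 rule: linorder_cases)
      case less thus ?thesis using Linc[of y x0] x0 that by auto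
    next
      case greater thus ?thesis using Linc[of x0 y] x0 that False by auto
    qed (use x0 in auto)
  qed
  have eqv: "L y = ln 2 \<longleftrightarrow> y = x0" if "0 < y" "y < 1" for y
  proof (cases "c \<le> y")
    case True thus ?thesis using Lbig[of y] that x0c by auto
  next
    case False
    show ?thesis
    proof (cases y x0 rule: linorder_cases)
      case less thus ?thesis using Linc[of y x0] x0 that by auto
    next
      case greater thus ?thesis using Linc[of x0 y] x0 that False by auto
    qed (use x0 in auto)
  qed
  show ?thesis
    by (rule exI[of _ x0]) (use x00 x0c c1 key cmp eqv in auto)
qed


definition ginv :: "real \<Rightarrow> real \<Rightarrow> real" where "ginv \<rho> r = (r + \<rho>)/(\<rho>*(1+r))"

lemma ginv_FF:
  assumes "0 < \<rho>" "1 - inverse \<rho> * a * b \<noteq> 0" "1 + a \<noteq> 0" "1 + b \<noteq> 0"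
  shows "ginv \<rho> (FF \<rho> a b) = ginv \<rho> a * ginv \<rho> b"
proof -
  define D where "D = 1 - inverse \<rho> * a * b"
  define N where "N = (1 + (inverse \<rho> + 1) * a) * b + a"
  have F: "FF \<rho> a b = N / D" unfolding FF_def D_def N_def ..
  have e1: "\<rho>*(N + \<rho>*D) = (a+\<rho>)*(b+\<rho>)" unfolding N_def D_def using assms(1)
    by (simp add: field_simps; simp add: algebra_simps)
  have e2: "D + N = (1+a)*(1+b)" unfolding N_def D_def using assms(1)
    by (simp add: field_simps; simp add: algebra_simps)
  have Dnz: "D \<noteq> 0" using assms unfolding D_def by simp
  have q1: "N/D + \<rho> = (N + \<rho>*D)/D" using Dnz by (simp add: field_simps)
  have q2: "\<rho>*(1 + N/D) = (\<rho>*(D+N))/D" using Dnz by (simp add: field_simps)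
  have "ginv \<rho> (N/D) = ((N + \<rho>*D)/D) / ((\<rho>*(D+N))/D)" unfolding ginv_def q1 q2 ..
  also have "\<dots> = (N + \<rho>*D)/(\<rho>*(D+N))" using Dnz by simp
  also have "\<dots> = (\<rho>*(N + \<rho>*D))/(\<rho>*(\<rho>*(D+N)))" using assms(1) by simp
  also have "\<dots> = ((a+\<rho>)*(b+\<rho>))/(\<rho>*(\<rho>*((1+a)*(1+b))))" by (simp only: e1 e2)
  also have "\<dots> = ginv \<rho> a * ginv \<rho> b" unfolding ginv_def by (simp add: field_simps)
  finally show ?thesis using F by simp
qed

lemma ginv_mono: assumes "0 < \<rho>" "\<rho> < 1" "-1 < a" "a \<le> b" shows "ginv \<rho> a \<le> ginv \<rho> b"
proof -
  have "(a+\<rho>)*(1+b) \<le> (b+\<rho>)*(1+a)"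
  proof -
    have "(b+\<rho>)*(1+a) - (a+\<rho>)*(1+b) = (1-\<rho>)*(b-a)" by (simp add: algebra_simps)
    moreover have "0 \<le> (1-\<rho>)*(b-a)" using assms by simp
    ultimately show ?thesis by simp
  qed
  moreover have "0 < 1+a" "0 < 1+b" using assms by auto
  ultimately show ?thesis unfolding ginv_def using assms(1)
    by (simp add: divide_le_eq le_divide_eq mult.commute mult.left_commute)
qed

lemma ginv_rho2: assumes "0 < \<rho>" shows "ginv \<rho> (\<rho>\<^sup>2) = (1+\<rho>)/(1+\<rho>\<^sup>2)"
proof -
  have "ginv \<rho> (\<rho>\<^sup>2) = (\<rho>*(1+\<rho>))/(\<rho>*(1+\<rho>\<^sup>2))" unfolding ginv_def by (simp add: algebra_simps power2_eq_square)
  also have "\<dots> = (1+\<rho>)/(1+\<rho>\<^sup>2)" using assms by (intro mult_divide_mult_cancel_left) simp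
  finally show ?thesis .
qed

lemma ginv_rho: assumes "0 < \<rho>" shows "ginv \<rho> \<rho> = 2/(1+\<rho>)"
proof -
  have "ginv \<rho> \<rho> = (\<rho>*2)/(\<rho>*(1+\<rho>))" unfolding ginv_def by (simp add: algebra_simps)
  also have "\<dots> = 2/(1+\<rho>)" using assms by (intro mult_divide_mult_cancel_left) simp
  finally show ?thesis .
qed


theorem lemma5p6:
  fixes \<rho> :: real and \<Lambda> :: nat
  assumes "0 < \<rho>" and "\<rho> < 1" and "\<Lambda> \<ge> 2"
  shows "(\<Lambda> \<ge> 3 \<longrightarrow>
            (\<exists>!(x::real). 0 < x \<and> x < 1 \<and> (1 + x) ^ \<Lambda> = 2 * (1 + x\<^sup>2) ^ (\<Lambda> - 1)))
    \<and> ((\<exists>r :: nat \<Rightarrow> real.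
            (\<forall>s. 1 \<le> s \<and> s \<le> \<Lambda> - 2 \<longrightarrow>
               r (s + 1) = ((1 + (inverse \<rho> + 1) * r 1) * r s + r 1) / (1 - inverse \<rho> * r 1 * r s))
          \<and> \<rho>\<^sup>2 \<le> r 1
          \<and> (\<forall>k. 1 \<le> k \<and> k < \<Lambda> - 1 \<longrightarrow> r k \<le> r (k + 1))
          \<and> r (\<Lambda> - 1) \<le> \<rho>)
       \<longleftrightarrow>
         (let X = (1 + \<rho>) / (1 + \<rho>\<^sup>2) in
          \<forall>k. 1 \<le> k \<and> k \<le> \<Lambda> - 1 \<longrightarrow>
             \<rho>\<^sup>2 \<le> \<rho> * (X ^ k - 1) / (1 - \<rho> * X ^ k) \<and> \<rho> * (X ^ k - 1) / (1 - \<rho> * X ^ k) \<le> \<rho>))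
    \<and> ((let X = (1 + \<rho>) / (1 + \<rho>\<^sup>2) in
          \<forall>k. 1 \<le> k \<and> k \<le> \<Lambda> - 1 \<longrightarrow>
             \<rho>\<^sup>2 \<le> \<rho> * (X ^ k - 1) / (1 - \<rho> * X ^ k) \<and> \<rho> * (X ^ k - 1) / (1 - \<rho> * X ^ k) \<le> \<rho>)
       \<longleftrightarrow>
         (let X = (2 / (1 + \<rho>)) powr (1 / real (\<Lambda> - 1)) in
          \<forall>k. 1 \<le> k \<and> k \<le> \<Lambda> - 1 \<longrightarrow>
             \<rho>\<^sup>2 \<le> \<rho> * (X ^ k - 1) / (1 - \<rho> * X ^ k) \<and> \<rho> * (X ^ k - 1) / (1 - \<rho> * X ^ k) \<le> \<rho>))
    \<and> ((let X = (2 / (1 + \<rho>)) powr (1 / real (\<Lambda> - 1)) in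
          \<forall>k. 1 \<le> k \<and> k \<le> \<Lambda> - 1 \<longrightarrow>
             \<rho>\<^sup>2 \<le> \<rho> * (X ^ k - 1) / (1 - \<rho> * X ^ k) \<and> \<rho> * (X ^ k - 1) / (1 - \<rho> * X ^ k) \<le> \<rho>)
       \<longleftrightarrow> (1 + \<rho>) ^ \<Lambda> \<le> 2 * (1 + \<rho>\<^sup>2) ^ (\<Lambda> - 1))
    \<and> ((1 + \<rho>) ^ \<Lambda> \<le> 2 * (1 + \<rho>\<^sup>2) ^ (\<Lambda> - 1) \<longleftrightarrow> \<rho> \<le> rho_star \<Lambda>)"
proof -
  have r0: "0 < \<rho>" and r1: "\<rho> < 1" using assms by auto
  define M where "M = \<Lambda> - 1"
  have M1: "1 \<le> M" and LM: "\<Lambda> = M + 1" using assms unfolding M_def by auto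
  define Xb where "Xb = (1+\<rho>)/(1+\<rho>\<^sup>2)"
  define Xc where "Xc = (2/(1+\<rho>)) powr (1 / real (\<Lambda> - 1))"
  have Xb1: "1 < Xb" unfolding Xb_def using Xb_gt1[OF r0 r1] .
  have lt: "2/(1+\<rho>) < 1/\<rho>" using r0 r1 by (simp add: field_simps)
  have d_iff: "(1 + \<rho>) ^ \<Lambda> \<le> 2 * (1 + \<rho>\<^sup>2) ^ (\<Lambda> - 1) \<longleftrightarrow> Xb^M \<le> 2/(1+\<rho>)"
    using lemD[OF r0, of M] unfolding Xb_def LM by simp
  have b_iff: "(let X = (1 + \<rho>) / (1 + \<rho>\<^sup>2) in
          \<forall>k. 1 \<le> k \<and> k \<le> \<Lambda> - 1 \<longrightarrow>
             \<rho>\<^sup>2 \<le> \<rho> * (X ^ k - 1) / (1 - \<rho> * X ^ k) \<and> \<rho> * (X ^ k - 1) / (1 - \<rho> * X ^ k) \<le> \<rho>)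
      \<longleftrightarrow> Xb^M \<le> 2/(1+\<rho>)"
  proof -
    have "(let X = (1 + \<rho>) / (1 + \<rho>\<^sup>2) in
          \<forall>k. 1 \<le> k \<and> k \<le> \<Lambda> - 1 \<longrightarrow>
             \<rho>\<^sup>2 \<le> \<rho> * (X ^ k - 1) / (1 - \<rho> * X ^ k) \<and> \<rho> * (X ^ k - 1) / (1 - \<rho> * X ^ k) \<le> \<rho>)
       \<longleftrightarrow> (\<forall>k. 1 \<le> k \<and> k \<le> M \<longrightarrow> \<rho>\<^sup>2 \<le> gg \<rho> (Xb^k) \<and> gg \<rho> (Xb^k) \<le> \<rho>)"
      unfolding Let_def gg_def Xb_def M_def ..
    also have "\<dots> \<longleftrightarrow> Xb^M \<le> 2/(1+\<rho>)" using lemC[OF r0 r1 M1, of Xb] unfolding Xb_def by simp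
    finally show ?thesis .
  qed
  have XcM: "Xc^M = 2/(1+\<rho>)"
  proof -
    have p: "0 < 2/(1+\<rho>)" using r0 by simp
    have "Xc^M = Xc powr real M" unfolding Xc_def using p by (simp add: powr_realpow)
    also have "\<dots> = 2/(1+\<rho>)" unfolding Xc_def M_def using p M1 assms unfolding M_def
      by (simp add: powr_powr)
    finally show ?thesis .
  qed
  have Xc0: "0 \<le> Xc" unfolding Xc_def by simp
  have c_iff: "(let X = (2 / (1 + \<rho>)) powr (1 / real (\<Lambda> - 1)) in
          \<forall>k. 1 \<le> k \<and> k \<le> \<Lambda> - 1 \<longrightarrow>
             \<rho>\<^sup>2 \<le> \<rho> * (X ^ k - 1) / (1 - \<rho> * X ^ k) \<and> \<rho> * (X ^ k - 1) / (1 - \<rho> * X ^ k) \<le> \<rho>)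
      \<longleftrightarrow> Xb^M \<le> 2/(1+\<rho>)"
  proof -
    have "(let X = (2 / (1 + \<rho>)) powr (1 / real (\<Lambda> - 1)) in
          \<forall>k. 1 \<le> k \<and> k \<le> \<Lambda> - 1 \<longrightarrow>
             \<rho>\<^sup>2 \<le> \<rho> * (X ^ k - 1) / (1 - \<rho> * X ^ k) \<and> \<rho> * (X ^ k - 1) / (1 - \<rho> * X ^ k) \<le> \<rho>)
       \<longleftrightarrow> (\<forall>k. 1 \<le> k \<and> k \<le> M \<longrightarrow> \<rho>\<^sup>2 \<le> gg \<rho> (Xc^k) \<and> gg \<rho> (Xc^k) \<le> \<rho>)"
      unfolding Let_def gg_def Xc_def M_def ..
    also have "\<dots> \<longleftrightarrow> Xb \<le> Xc" using lemC[OF r0 r1 M1, of Xc] XcM unfolding Xb_def by simp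
    also have "\<dots> \<longleftrightarrow> Xb^M \<le> Xc^M" using Xc0 Xb1 M1 by (simp add: power_mono_iff)
    finally show ?thesis using XcM by simp
  qed
  have a_iff: "(\<exists>r :: nat \<Rightarrow> real.
            (\<forall>s. 1 \<le> s \<and> s \<le> \<Lambda> - 2 \<longrightarrow>
               r (s + 1) = ((1 + (inverse \<rho> + 1) * r 1) * r s + r 1) / (1 - inverse \<rho> * r 1 * r s))
          \<and> \<rho>\<^sup>2 \<le> r 1
          \<and> (\<forall>k. 1 \<le> k \<and> k < \<Lambda> - 1 \<longrightarrow> r k \<le> r (k + 1))
          \<and> r (\<Lambda> - 1) \<le> \<rho>) \<longleftrightarrow> Xb^M \<le> 2/(1+\<rho>)"
  proof
    assume "\<exists>r :: nat \<Rightarrow> real.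
            (\<forall>s. 1 \<le> s \<and> s \<le> \<Lambda> - 2 \<longrightarrow>
               r (s + 1) = ((1 + (inverse \<rho> + 1) * r 1) * r s + r 1) / (1 - inverse \<rho> * r 1 * r s))
          \<and> \<rho>\<^sup>2 \<le> r 1
          \<and> (\<forall>k. 1 \<le> k \<and> k < \<Lambda> - 1 \<longrightarrow> r k \<le> r (k + 1))
          \<and> r (\<Lambda> - 1) \<le> \<rho>"
    then obtain r :: "nat \<Rightarrow> real" where
      R1: "\<forall>s. 1 \<le> s \<and> s \<le> \<Lambda> - 2 \<longrightarrow>
               r (s + 1) = ((1 + (inverse \<rho> + 1) * r 1) * r s + r 1) / (1 - inverse \<rho> * r 1 * r s)"
      and h1: "\<rho>\<^sup>2 \<le> r 1" and R3: "\<forall>k. 1 \<le> k \<and> k < \<Lambda> - 1 \<longrightarrow> r k \<le> r (k + 1)"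
      and hM0: "r (\<Lambda> - 1) \<le> \<rho>" by blast
    have M2: "M - 1 = \<Lambda> - 2" unfolding M_def by simp
    have rec: "r (s + 1) = FF \<rho> (r 1) (r s)" if "1 \<le> s" "s \<le> M - 1" for s
      using R1 that unfolding FF_def M2 by blast
    have hm: "r k \<le> r (k + 1)" if "1 \<le> k" "k < M" for k
      using R3 that unfolding M_def by blast
    have hM: "r M \<le> \<rho>" using hM0 unfolding M_def .
    have lo: "r 1 \<le> r k" if "1 \<le> k" "k \<le> M" for k
      using that(1)
    proof (induction k rule: dec_induct)
      case (step m) thus ?case using hm[of m] that by simp
    qed simp
    have hi: "r k \<le> r j" if "1 \<le> k" "k \<le> j" "j \<le> M" for k j
      using that(2)
    proof (induction j rule: dec_induct)
      case (step m) thus ?case using hm[of m] that by simp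
    qed simp
    have bnd: "\<rho>\<^sup>2 \<le> r k \<and> r k \<le> \<rho>" if "1 \<le> k" "k \<le> M" for k
      using lo[OF that] hi[OF that(1) that(2) order_refl] h1 hM by simp
    have rho2: "0 < \<rho>\<^sup>2" using r0 by simp
    define t where "t k = ginv \<rho> (r k)" for k
    have tpow: "t k = t 1 ^ k" if "1 \<le> k" "k \<le> M" for k
      using that(1)
    proof (induction k rule: dec_induct)
      case (step m)
      have bm: "\<rho>\<^sup>2 \<le> r m \<and> r m \<le> \<rho>" using bnd[of m] step that by simp
      have b1: "\<rho>\<^sup>2 \<le> r 1 \<and> r 1 \<le> \<rho>" using bnd[of 1] M1 by simp
      have "0 \<le> r m" using bm rho2 by linarith
      hence "r 1 * r m \<le> \<rho> * \<rho>" using bm b1 r0 by (intro mult_mono) auto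
      hence "r 1 * r m / \<rho> \<le> \<rho>" using r0 by (simp add: divide_le_eq)
      moreover have "inverse \<rho> * r 1 * r m = r 1 * r m / \<rho>" by (simp add: divide_inverse mult.commute mult.left_commute)
      ultimately have D: "1 - inverse \<rho> * r 1 * r m \<noteq> 0" using r1 by linarith
      have n1: "1 + r 1 \<noteq> 0" using b1 rho2 by linarith
      have n2: "1 + r m \<noteq> 0" using bm rho2 by linarith
      have "r (Suc m) = FF \<rho> (r 1) (r m)" using rec[of m] step that by simp
      hence "t (Suc m) = t 1 * t m" unfolding t_def using ginv_FF[OF r0 D n1 n2] by simp
      thus ?case using step by simp
    qed simp
    have "Xb \<le> t 1" unfolding t_def Xb_def using ginv_rho2[OF r0] ginv_mono[OF r0 r1, of "\<rho>\<^sup>2" "r 1"] h1 rho2 by simp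
    hence "Xb^M \<le> t 1 ^ M" using Xb1 by (intro power_mono) auto
    also have "\<dots> = t M" using tpow[of M] M1 by simp
    also have "\<dots> \<le> 2/(1+\<rho>)"
    proof -
      have "\<rho>\<^sup>2 \<le> r M" using bnd[of M] M1 by simp
      hence "-1 < r M" using rho2 by linarith
      thus ?thesis unfolding t_def using ginv_rho[OF r0] ginv_mono[OF r0 r1, of "r M" \<rho>] hM by simp
    qed
    finally show "Xb^M \<le> 2/(1+\<rho>)" .
  next
    assume H: "Xb^M \<le> 2/(1+\<rho>)"
    have XbJ: "Xb^j \<le> 2/(1+\<rho>)" if "j \<le> M" for j
    proof -
      have "Xb^j \<le> Xb^M" using that Xb1 by (intro power_increasing) auto
      thus ?thesis using H by linarith
    qed
    have posJ: "1 - \<rho>*Xb^j \<noteq> 0" "Xb^j < 1/\<rho>" if "j \<le> M" for j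
    proof -
      show "Xb^j < 1/\<rho>" using XbJ[OF that] lt by simp
      thus "1 - \<rho>*Xb^j \<noteq> 0" using r0 by (simp add: field_simps)
    qed
    have lowJ: "Xb \<le> Xb^j" if "1 \<le> j" for j
    proof -
      have "Xb^1 \<le> Xb^j" using that Xb1 by (intro power_increasing) auto
      thus ?thesis by simp
    qed
    define r where "r k = gg \<rho> (Xb^k)" for k
    show "\<exists>r :: nat \<Rightarrow> real.
            (\<forall>s. 1 \<le> s \<and> s \<le> \<Lambda> - 2 \<longrightarrow>
               r (s + 1) = ((1 + (inverse \<rho> + 1) * r 1) * r s + r 1) / (1 - inverse \<rho> * r 1 * r s))
          \<and> \<rho>\<^sup>2 \<le> r 1
          \<and> (\<forall>k. 1 \<le> k \<and> k < \<Lambda> - 1 \<longrightarrow> r k \<le> r (k + 1))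
          \<and> r (\<Lambda> - 1) \<le> \<rho>"
    proof (intro exI[of _ r] conjI allI impI)
      fix s assume s: "1 \<le> s \<and> s \<le> \<Lambda> - 2"
      have sM: "s + 1 \<le> M" using s assms(3) unfolding M_def by linarith
      have "r (s+1) = gg \<rho> (Xb * Xb^s)" unfolding r_def by simp
      also have "\<dots> = FF \<rho> (gg \<rho> Xb) (gg \<rho> (Xb^s))"
        using posJ[of 1] posJ[of s] posJ[of "s+1"] sM M1 by (intro FF_gg[symmetric] r0 r1) auto
      finally show "r (s + 1) = ((1 + (inverse \<rho> + 1) * r 1) * r s + r 1) / (1 - inverse \<rho> * r 1 * r s)"
        unfolding FF_def r_def by simp
    next
      show "\<rho>\<^sup>2 \<le> r 1" unfolding r_def using lemK[OF r0 r1, of Xb] XbJ[of 1] M1 unfolding Xb_def by simp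
    next
      fix k assume k: "1 \<le> k \<and> k < \<Lambda> - 1"
      show "r k \<le> r (k+1)" unfolding r_def
        using k posJ(2)[of "k+1"] Xb1 unfolding M_def
        by (intro gg_mono r0 r1 power_increasing) auto
    next
      show "r (\<Lambda> - 1) \<le> \<rho>" unfolding r_def M_def[symmetric]
        using lemK[OF r0 r1, of "Xb^M"] XbJ[of M] lowJ[of M] M1 unfolding Xb_def by simp
    qed
  qed
  have e_part: "((1 + \<rho>) ^ \<Lambda> \<le> 2 * (1 + \<rho>\<^sup>2) ^ (\<Lambda> - 1) \<longleftrightarrow> \<rho> \<le> rho_star \<Lambda>)
     \<and> (\<Lambda> \<ge> 3 \<longrightarrow> (\<exists>!(x::real). 0 < x \<and> x < 1 \<and> (1 + x) ^ \<Lambda> = 2 * (1 + x\<^sup>2) ^ (\<Lambda> - 1)))"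
  proof (cases "\<Lambda> = 2")
    case True
    have "(1+\<rho>)^2 \<le> 2*(1+\<rho>\<^sup>2)^1"
    proof -
      have "2*(1+\<rho>\<^sup>2)^1 - (1+\<rho>)^2 = (1-\<rho>)^2" by (simp add: algebra_simps power2_eq_square)
      thus ?thesis using zero_le_power2[of "1-\<rho>"] by linarith
    qed
    thus ?thesis using True r1 unfolding rho_star_def by simp
  next
    case False
    hence L3: "\<Lambda> \<ge> 3" using assms by simp
    obtain x0 :: real where x0: "0 < x0" "x0 < 1"
      and eq: "\<And>y. 0 < y \<Longrightarrow> y < 1 \<Longrightarrow> ((1 + y) ^ \<Lambda> = 2 * (1 + y\<^sup>2) ^ (\<Lambda> - 1) \<longleftrightarrow> y = x0)"
      and le: "\<And>y. 0 < y \<Longrightarrow> y < 1 \<Longrightarrow> ((1 + y) ^ \<Lambda> \<le> 2 * (1 + y\<^sup>2) ^ (\<Lambda> - 1) \<longleftrightarrow> y \<le> x0)"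
      using lemE[OF L3] by blast
    have rs: "rho_star \<Lambda> = x0" unfolding rho_star_def using False
      by (simp, intro the_equality) (use x0 eq in auto)
    show ?thesis using rs le[OF r0 r1] L3 x0 eq
      by (intro conjI impI, simp) (rule ex1I[of _ x0], auto)
  qed
  show ?thesis using a_iff b_iff c_iff d_iff e_part by simp
qed

end
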